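(* Let $a_1, a_2, \ldots \in (0,1)$ be independent random variables with common c.d.f. $G$ such that, for some $\epsilon \in (0,1)$, $G$ is continuously differentiable on $(1-\epsilon,1)$ with derivative satisfying $g(x) = \kappa \beta (1-x)^{\beta-1}(1 + O((1-x)^\nu))$ as $x \to 1-$, for some $\beta > 1$, $\nu > 0$, $\kappa > 0$. For each $N$ let $\widehat a_i = a_i + \widehat\rho_i$, $i = 1,\ldots,N$, where $\widehat\rho_i = \widehat\rho_{i,N}$ are arbitrary random variables, and define $$ G_N(x) := \frac1N\sum_{i=1}^N \mathbf 1(a_i \le x), \qquad \widehat G_N(x) := \frac1N\sum_{i=1}^N \mathbf 1(\widehat a_i \le x). $$ Fix $r > 1$. Assume that as $N\to\infty$, $\delta = \delta_N \to 0$ so that $N\delta^\beta \to \infty$, and that for some $p\ge1$, $$ \max_{1 \le i \le N} \mathbb P(|\widehat\rho_i| > \varepsilon) \le \frac{\chi}{\varepsilon^p} + \chi' \qquad \text{for all } \varepsilon\in(0,1), $$ where $\chi=\chi_N\to0$, $\chi'=\chi'_N\to0$ satisfy $$ \sqrt{N\delta^\beta}\,\max\Big\{\frac{\chi'}{\delta^\beta}, \Big(\frac{\chi}{\delta^{p+\beta}}\Big)^{1/(p+1)}\Big\}\ln\delta \to 0. $$ Then $$ (N\delta^{-\beta})^{1/2}\big(\widehat G_N(1-\delta) - G_N(1-\delta)\big) = o_p(1), $$ $$ (N\delta^{-\beta})^{1/2}\int_{\delta^r}^{\delta}\big(\widehat G_N(1-x) - G_N(1-x)\big)\frac{\mathrm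 dx}{x} = o_p(1). $$
   Context: $o_p(1)$ denotes a sequence of random variables converging to $0$ in probability as $N\to\infty$. *)

theory Defs
  imports "HOL-Probability.Probability" "HOL-Library.Landau_Symbols"
begin

definition emp_cdf :: "nat \<Rightarrow> (nat \<Rightarrow> 'a \<Rightarrow> real) \<Rightarrow> real \<Rightarrow> 'a \<Rightarrow> real" where
  "emp_cdf N X x w = (1 / real N) * (\<Sum>i\<in>{1..N}. if X i w \<le> x then 1 else 0)"

definition o_p_one :: "'a measure \<Rightarrow> (nat \<Rightarrow> 'a \<Rightarrow> real) \<Rightarrow> bool" where
  "o_p_one M Y \<longleftrightarrow> (\<forall>e>0. (\<lambda>N. measure M {w \<in> space M. \<bar>Y N w\<bar> > e}) \<longlonglongrightarrow> 0)"

end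

theory Submission
  imports Defs
begin


lemma g_bound:
  fixes g :: "real \<Rightarrow> real" and eps beta nu kappa :: real
  assumes eps: "0 < eps" "eps < 1"
    and params: "beta > 1" "nu > 0" "kappa > 0"
    and g_asym: "(\<lambda>x. g x - kappa * beta * (1 - x) powr (beta - 1))
                   \<in> O[at_left 1](\<lambda>x. (1 - x) powr (beta - 1) * (1 - x) powr nu)"
  shows "\<exists>C \<eta>. C \<ge> 0 \<and> 0 < \<eta> \<and> \<eta> \<le> eps \<and>
           (\<forall>x. 1 - \<eta> < x \<and> x < 1 \<longrightarrow> g x \<le> C * (1 - x) powr (beta - 1))"
proof -
  obtain c where c: "c > 0" and ev: "eventually (\<lambda>x. norm (g x - kappa * beta * (1 - x) powr (beta - 1))
      \<le> c * norm ((1 - x) powr (beta - 1) * (1 - x) powr nu)) (at_left (1::real))"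
    using landau_o.bigE[OF g_asym] by blast
  then obtain b where b: "b < 1" and hb: "\<And>y. y > b \<Longrightarrow> y < 1 \<Longrightarrow>
      norm (g y - kappa * beta * (1 - y) powr (beta - 1)) \<le> c * norm ((1 - y) powr (beta - 1) * (1 - y) powr nu)"
    unfolding eventually_at_left_field by blast
  define \<eta> where "\<eta> = min eps (1 - b)"
  have "\<forall>x. 1 - \<eta> < x \<and> x < 1 \<longrightarrow> g x \<le> (kappa * beta + c) * (1 - x) powr (beta - 1)"
  proof (intro allI impI)
    fix x assume x: "1 - \<eta> < x \<and> x < 1"
    hence xb: "x > b" unfolding \<eta>_def by auto
    have h: "\<bar>g x - kappa * beta * (1 - x) powr (beta - 1)\<bar> \<le> c * \<bar>(1 - x) powr (beta - 1) * (1 - x) powr nu\<bar>"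
      using hb[OF xb] x by simp
    have p1: "(1 - x) powr nu \<le> 1" using x params eps unfolding \<eta>_def
      by (intro powr_le1) auto
    have p0: "0 \<le> (1 - x) powr (beta - 1)" by simp
    have "\<bar>(1 - x) powr (beta - 1) * (1 - x) powr nu\<bar> \<le> (1 - x) powr (beta - 1)"
      using p1 p0 by (simp add: abs_mult mult_left_le)
    hence "c * \<bar>(1 - x) powr (beta - 1) * (1 - x) powr nu\<bar> \<le> c * (1 - x) powr (beta - 1)"
      using c by (intro mult_left_mono) auto
    with h show "g x \<le> (kappa * beta + c) * (1 - x) powr (beta - 1)"
      by (simp add: algebra_simps)
  qed
  moreover have "kappa * beta + c \<ge> 0" using params c by simp
  moreover have "0 < \<eta>" "\<eta> \<le> eps" using eps b unfolding \<eta>_def by auto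
  ultimately show ?thesis by blast
qed



lemma window_lt1:
  fixes M :: "'a measure" and X :: "'a \<Rightarrow> real" and G g :: "real \<Rightarrow> real"
  assumes M: "prob_space M" and Xm: "X \<in> borel_measurable M"
    and cdf: "\<And>x. measure M {w \<in> space M. X w \<le> x} = G x"
    and G_deriv: "\<And>x. x \<in> {1 - eps<..<1} \<Longrightarrow> (G has_real_derivative g x) (at x)"
    and eta: "0 < \<eta>" "\<eta> \<le> eps" "C \<ge> 0" "beta > 1"
    and gb: "\<forall>x. 1 - \<eta> < x \<and> x < 1 \<longrightarrow> g x \<le> C * (1 - x) powr (beta - 1)"
    and uv: "1 - \<eta> < u" "u \<le> v" "v < 1"
  shows "measure M {w \<in> space M. u < X w \<and> X w \<le> v} \<le> C * (1 - u) powr (beta - 1) * (v - u)"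
proof (cases "u = v")
  case True
  then have "{w \<in> space M. u < X w \<and> X w \<le> v} = {}" by auto
  then show ?thesis using True by (simp only:) simp
next
  case False
  then have uv': "u < v" using uv by simp
  interpret prob_space M by fact
  have eq: "{w \<in> space M. u < X w \<and> X w \<le> v} = {w \<in> space M. X w \<le> v} - {w \<in> space M. X w \<le> u}"
    by auto
  have "measure M {w \<in> space M. u < X w \<and> X w \<le> v} = G v - G u"
    unfolding eq cdf[symmetric]
    by (rule finite_measure_Diff) (use Xm uv in \<open>auto\<close>)
  also obtain z where z: "u < z" "z < v" and zeq: "G v - G u = (v - u) * g z"
    using MVT2[OF uv', of G g] G_deriv uv eta by force
  note zeq
  also have "(v - u) * g z \<le> (v - u) * (C * (1 - z) powr (beta - 1))"
    using gb z uv by (intro mult_left_mono) auto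
  also have "\<dots> \<le> (v - u) * (C * (1 - u) powr (beta - 1))"
    using z uv eta by (intro mult_left_mono powr_mono2) auto
  finally show ?thesis by (simp add: algebra_simps)
qed

lemma window:
  fixes M :: "'a measure" and X :: "'a \<Rightarrow> real" and G g :: "real \<Rightarrow> real"
  assumes M: "prob_space M" and Xm: "X \<in> borel_measurable M"
    and Xr: "\<And>w. w \<in> space M \<Longrightarrow> X w < 1"
    and cdf: "\<And>x. measure M {w \<in> space M. X w \<le> x} = G x"
    and G_deriv: "\<And>x. x \<in> {1 - eps<..<1} \<Longrightarrow> (G has_real_derivative g x) (at x)"
    and eta: "0 < \<eta>" "\<eta> \<le> eps" "C \<ge> 0" "beta > 1"
    and gb: "\<forall>x. 1 - \<eta> < x \<and> x < 1 \<longrightarrow> g x \<le> C * (1 - x) powr (beta - 1)"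
    and uv: "1 - \<eta> < u" "u \<le> v"
  shows "measure M {w \<in> space M. u < X w \<and> X w \<le> v} \<le> C * (1 - u) powr (beta - 1) * (v - u)"
proof (cases "v < 1")
  case True
  then show ?thesis using window_lt1[OF M Xm cdf G_deriv eta gb uv] by blast
next
  case False
  interpret prob_space M by fact
  show ?thesis
  proof (cases "u < 1")
    case False
    then have "{w \<in> space M. u < X w \<and> X w \<le> v} = {}" using Xr by force
    then show ?thesis using False uv eta by (simp only:) simp
  next
    case True
    define z where "z n = 1 - (1 - u) / (real n + 2)" for n
    define A where "A n = {w \<in> space M. u < X w \<and> X w \<le> z n}" for n
    have zu: "u \<le> z n" "z n < 1" for n
      using True mult_nonneg_nonneg[of "1 - u" "1 + real n"] by (auto simp: z_def field_simps)
    have zv: "z n \<le> v" for n using zu(2)[of n] False by simp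
    have zmono: "z m \<le> z n" if "m \<le> n" for m n
    proof -
      have "(1 - u) / (real n + 2) \<le> (1 - u) / (real m + 2)"
        using True that by (intro divide_left_mono) auto
      then show ?thesis unfolding z_def by simp
    qed
    have inc: "incseq A"
      unfolding incseq_def A_def using zmono by (auto intro: order_trans)
    have sets: "range A \<subseteq> sets M" unfolding A_def using Xm by auto
    have un: "(\<Union>n. A n) = {w \<in> space M. u < X w \<and> X w \<le> v}"
    proof safe
      fix w n assume "w \<in> A n" then show "X w \<le> v" using zv[of n] unfolding A_def by auto
    next
      fix w assume w: "w \<in> space M" "u < X w" "X w \<le> v"
      have "X w < 1" using Xr w by auto
      obtain n where n: "(1 - u) / (1 - X w) < real n"
        using reals_Archimedean2 by blast
      have "(1 - u) / (real n + 2) \<le> 1 - X w"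
        using n \<open>X w < 1\<close> True by (auto simp: field_simps)
      then have "X w \<le> z n" unfolding z_def by simp
      then show "w \<in> (\<Union>n. A n)" using w unfolding A_def by auto
    qed (auto simp: A_def)
    have lim: "(\<lambda>n. measure M (A n)) \<longlonglongrightarrow> measure M {w \<in> space M. u < X w \<and> X w \<le> v}"
      using finite_Lim_measure_incseq[OF sets inc] un by simp
    have bnd: "measure M (A n) \<le> C * (1 - u) powr (beta - 1) * (v - u)" for n
    proof -
      have "measure M (A n) \<le> C * (1 - u) powr (beta - 1) * (z n - u)"
        unfolding A_def using window_lt1[OF M Xm cdf G_deriv eta gb uv(1) zu(1) zu(2)] .
      also have "\<dots> \<le> C * (1 - u) powr (beta - 1) * (v - u)"
        using zv[of n] eta by (intro mult_left_mono) auto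
      finally show ?thesis .
    qed
    show ?thesis using lim bnd by (intro LIMSEQ_le_const2) auto
  qed
qed



lemma markov_enn:
  fixes M :: "'a measure" and Y :: "'a \<Rightarrow> real" and Z :: "'a \<Rightarrow> ennreal"
  assumes M: "prob_space M" and YZ: "\<And>w. w \<in> space M \<Longrightarrow> ennreal \<bar>Y w\<bar> \<le> Z w"
    and EZ: "(\<integral>\<^sup>+w. Z w \<partial>M) \<le> ennreal B" and B: "B \<ge> 0" and e: "e > 0"
  shows "measure M {w \<in> space M. \<bar>Y w\<bar> > e} \<le> B / e"
proof (cases "{w \<in> space M. \<bar>Y w\<bar> > e} \<in> sets M")
  case False
  then show ?thesis using B e by (simp add: measure_notin_sets)
next
  case True
  interpret prob_space M by fact
  let ?A = "{w \<in> space M. \<bar>Y w\<bar> > e}"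
  have "ennreal e * emeasure M ?A = (\<integral>\<^sup>+w. ennreal e * indicator ?A w \<partial>M)"
    using True by (simp add: nn_integral_cmult_indicator)
  also have "\<dots> \<le> (\<integral>\<^sup>+w. Z w \<partial>M)"
  proof (rule nn_integral_mono)
    fix w assume w: "w \<in> space M"
    show "ennreal e * indicator ?A w \<le> Z w"
    proof (cases "w \<in> ?A")
      case True
      then have "ennreal e \<le> ennreal \<bar>Y w\<bar>" by (auto intro: ennreal_leI)
      then have "ennreal e \<le> Z w" using YZ[OF w] by (rule order_trans)
      then show ?thesis using True by simp
    qed simp
  qed
  also note EZ
  finally have "ennreal (e * measure M ?A) \<le> ennreal B"
    using e by (simp add: emeasure_eq_measure ennreal_mult)
  then have "e * measure M ?A \<le> B" using B by (simp add: ennreal_le_iff)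
  then show ?thesis using e by (simp add: field_simps)
qed

lemma ind_diff:
  fixes a \<rho> y eps :: real
  shows "\<bar>(if a + \<rho> \<le> y then 1 else 0) - (if a \<le> y then 1 else 0) :: real\<bar>
     \<le> (if eps < \<bar>\<rho>\<bar> then 1 else 0) + (if y - eps < a \<and> a \<le> y + eps then 1 else 0)"
  by auto

lemma emp_diff:
  fixes a rho :: "nat \<Rightarrow> 'a \<Rightarrow> real"
  shows "\<bar>emp_cdf N (\<lambda>i w. a i w + rho i w) y w - emp_cdf N a y w\<bar>
    \<le> (\<Sum>i\<in>{1..N}. (if eps < \<bar>rho i w\<bar> then 1 else 0) + (if y - eps < a i w \<and> a i w \<le> y + eps then 1 else 0)) / real N"
proof -
  have "emp_cdf N (\<lambda>i w. a i w + rho i w) y w - emp_cdf N a y w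
     = (\<Sum>i\<in>{1..N}. (if a i w + rho i w \<le> y then 1 else 0) - (if a i w \<le> y then 1 else 0)) / real N"
    unfolding emp_cdf_def sum_subtractf by (simp add: diff_divide_distrib)
  also have "\<bar>\<dots>\<bar> \<le> (\<Sum>i\<in>{1..N}. \<bar>(if a i w + rho i w \<le> y then 1 else 0) - (if a i w \<le> y then 1 else 0) :: real\<bar>) / real N"
    by (simp add: divide_right_mono sum_abs)
  also have "\<dots> \<le> (\<Sum>i\<in>{1..N}. (if eps < \<bar>rho i w\<bar> then 1 else 0) + (if y - eps < a i w \<and> a i w \<le> y + eps then 1 else 0)) / real N"
    by (intro divide_right_mono sum_mono ind_diff) auto
  finally show ?thesis .
qed



lemma nn_ind:
  assumes "{w \<in> space M. P w} \<in> sets M"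
  shows "(\<integral>\<^sup>+w. ennreal (if P w then 1 else 0) \<partial>M) = emeasure M {w \<in> space M. P w}"
proof -
  have "(\<integral>\<^sup>+w. ennreal (if P w then 1 else 0) \<partial>M) = (\<integral>\<^sup>+w. indicator {w \<in> space M. P w} w \<partial>M)"
    by (intro nn_integral_cong) (auto simp: indicator_def)
  also have "\<dots> = emeasure M {w \<in> space M. P w}" using assms by simp
  finally show ?thesis .
qed

lemma claim1_fixed:
  fixes M :: "'a measure" and a rho :: "nat \<Rightarrow> 'a \<Rightarrow> real" and G g :: "real \<Rightarrow> real"
  assumes M: "prob_space M" and am: "\<And>i. a i \<in> borel_measurable M"
    and ar: "\<And>i w. w \<in> space M \<Longrightarrow> a i w < 1"
    and cdf: "\<And>i x. measure M {w \<in> space M. a i w \<le> x} = G x"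
    and G_deriv: "\<And>x. x \<in> {1 - eps<..<1} \<Longrightarrow> (G has_real_derivative g x) (at x)"
    and eta: "0 < \<eta>" "\<eta> \<le> eps" "C \<ge> 0" "beta > 1"
    and gb: "\<forall>x. 1 - \<eta> < x \<and> x < 1 \<longrightarrow> g x \<le> C * (1 - x) powr (beta - 1)"
    and rm: "\<And>i. rho i \<in> borel_measurable M"
    and hrho: "\<forall>i\<in>{1..N}. measure M {w \<in> space M. \<bar>rho i w\<bar> > \<epsilon>} \<le> P1"
    and N: "N \<ge> 1" and d: "0 < \<delta>" "2 * \<delta> < \<eta>" and ep: "0 < \<epsilon>" "\<epsilon> \<le> \<delta>"
    and c: "c \<ge> 0" and e: "e > 0"
  shows "measure M {w \<in> space M. \<bar>c * (emp_cdf N (\<lambda>i w. a i w + rho i w) (1 - \<delta>) w - emp_cdf N a (1 - \<delta>) w)\<bar> > e}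
     \<le> c * (P1 + C * (2 * \<delta>) powr (beta - 1) * (2 * \<epsilon>)) / e"
proof -
  interpret prob_space M by fact
  note [measurable] = am rm
  define Wb where "Wb = C * (2 * \<delta>) powr (beta - 1) * (2 * \<epsilon>)"
  define I1 where "I1 i w = (if \<epsilon> < \<bar>rho i w\<bar> then 1 else 0 :: real)" for i w
  define I2 where "I2 i w = (if 1 - \<delta> - \<epsilon> < a i w \<and> a i w \<le> 1 - \<delta> + \<epsilon> then 1 else 0 :: real)" for i w
  define Z where "Z w = ennreal (c / real N) * (\<Sum>i\<in>{1..N}. ennreal (I1 i w) + ennreal (I2 i w))" for w
  have P1: "P1 \<ge> 0" using hrho N by (meson atLeastAtMost_iff le_refl measure_nonneg order_trans)
  have wb: "measure M {w \<in> space M. 1 - \<delta> - \<epsilon> < a i w \<and> a i w \<le> 1 - \<delta> + \<epsilon>} \<le> Wb" for i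
  proof -
    have "measure M {w \<in> space M. 1 - \<delta> - \<epsilon> < a i w \<and> a i w \<le> 1 - \<delta> + \<epsilon>}
        \<le> C * (1 - (1 - \<delta> - \<epsilon>)) powr (beta - 1) * ((1 - \<delta> + \<epsilon>) - (1 - \<delta> - \<epsilon>))"
      by (rule window[OF M am ar cdf G_deriv eta gb]) (use d ep in auto)
    also have "\<dots> = C * (\<delta> + \<epsilon>) powr (beta - 1) * (2 * \<epsilon>)" by simp
    also have "\<dots> \<le> Wb" unfolding Wb_def
      using d ep eta by (intro mult_right_mono mult_left_mono powr_mono2) auto
    finally show ?thesis .
  qed
  have Wb0: "Wb \<ge> 0" unfolding Wb_def using eta ep by simp
  have "measure M {w \<in> space M. \<bar>c * (emp_cdf N (\<lambda>i w. a i w + rho i w) (1 - \<delta>) w - emp_cdf N a (1 - \<delta>) w)\<bar> > e}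
     \<le> c * (P1 + Wb) / e"
  proof (rule markov_enn[OF M _ _ _ e])
    fix w assume w: "w \<in> space M"
    have "\<bar>c * (emp_cdf N (\<lambda>i w. a i w + rho i w) (1 - \<delta>) w - emp_cdf N a (1 - \<delta>) w)\<bar>
       \<le> c * ((\<Sum>i\<in>{1..N}. I1 i w + I2 i w) / real N)"
      unfolding abs_mult I1_def I2_def using c mult_left_mono[OF emp_diff[of N a rho "1 - \<delta>" w \<epsilon>] c]
      by simp
    then have "ennreal \<bar>c * (emp_cdf N (\<lambda>i w. a i w + rho i w) (1 - \<delta>) w - emp_cdf N a (1 - \<delta>) w)\<bar>
       \<le> ennreal (c / real N * (\<Sum>i\<in>{1..N}. I1 i w + I2 i w))"
      by (intro ennreal_leI) simp
    also have "\<dots> = Z w"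
    proof -
      have nn: "0 \<le> I1 i w" "0 \<le> I2 i w" for i unfolding I1_def I2_def by auto
      have "ennreal (c / real N * (\<Sum>i\<in>{1..N}. I1 i w + I2 i w))
          = ennreal (c / real N) * ennreal (\<Sum>i\<in>{1..N}. I1 i w + I2 i w)"
        using c nn by (intro ennreal_mult) (auto intro: sum_nonneg add_nonneg_nonneg)
      also have "ennreal (\<Sum>i\<in>{1..N}. I1 i w + I2 i w) = (\<Sum>i\<in>{1..N}. ennreal (I1 i w + I2 i w))"
        using nn by (intro sum_ennreal[symmetric]) (auto intro: add_nonneg_nonneg)
      also have "\<dots> = (\<Sum>i\<in>{1..N}. ennreal (I1 i w) + ennreal (I2 i w))"
        using nn by (intro sum.cong refl ennreal_plus)
      finally show ?thesis unfolding Z_def .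
    qed
    finally show "ennreal \<bar>c * (emp_cdf N (\<lambda>i w. a i w + rho i w) (1 - \<delta>) w - emp_cdf N a (1 - \<delta>) w)\<bar> \<le> Z w" .
  next
    have "(\<integral>\<^sup>+w. Z w \<partial>M) = ennreal (c / real N) * (\<Sum>i\<in>{1..N}. (\<integral>\<^sup>+w. ennreal (I1 i w) \<partial>M) + (\<integral>\<^sup>+w. ennreal (I2 i w) \<partial>M))"
      unfolding Z_def I1_def I2_def
      by (simp add: nn_integral_cmult nn_integral_sum nn_integral_add)
    also have "\<dots> \<le> ennreal (c / real N) * (\<Sum>i\<in>{1..N}. ennreal P1 + ennreal Wb)"
    proof (intro mult_left_mono sum_mono add_mono)
      fix i assume i: "i \<in> {1..N}"
      show "(\<integral>\<^sup>+w. ennreal (I1 i w) \<partial>M) \<le> ennreal P1"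
        unfolding I1_def using hrho i
        by (subst nn_ind) (auto simp: emeasure_eq_measure intro!: ennreal_leI)
      show "(\<integral>\<^sup>+w. ennreal (I2 i w) \<partial>M) \<le> ennreal Wb"
        unfolding I2_def using wb[of i]
        by (subst nn_ind) (auto simp: emeasure_eq_measure intro!: ennreal_leI)
    qed simp
    also have "\<dots> = ennreal (c * (P1 + Wb))"
    proof -
      have "ennreal (c / real N) * (\<Sum>i\<in>{1..N}. ennreal P1 + ennreal Wb)
          = ennreal (c / real N) * (ennreal (real N) * ennreal (P1 + Wb))"
        using P1 Wb0 by (simp add: ennreal_of_nat_eq_real_of_nat flip: ennreal_plus)
      also have "\<dots> = ennreal (c / real N * (real N * (P1 + Wb)))"
        using c P1 Wb0 by (simp add: ennreal_mult[symmetric] del: ennreal_plus)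
      also have "c / real N * (real N * (P1 + Wb)) = c * (P1 + Wb)" using N by simp
      finally show ?thesis .
    qed
    finally show "(\<integral>\<^sup>+w. Z w \<partial>M) \<le> ennreal (c * (P1 + Wb))" .
  qed (use c P1 Wb0 in simp)
  then show ?thesis unfolding Wb_def .
qed



lemma nn_integral_inv:
  fixes lo hi :: real
  assumes "0 < lo" "lo \<le> hi"
  shows "(\<integral>\<^sup>+x. ennreal (if lo \<le> x \<and> x \<le> hi then 1 / x else 0) \<partial>lborel) = ennreal (ln hi - ln lo)"
proof -
  have "(\<integral>\<^sup>+x. ennreal (if lo \<le> x \<and> x \<le> hi then 1 / x else 0) \<partial>lborel)
      = (\<integral>\<^sup>+x. ennreal (1 / x) * indicator {lo..hi} x \<partial>lborel)"
    by (intro nn_integral_cong) (auto simp: indicator_def)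
  also have "\<dots> = ennreal (ln hi - ln lo)"
  proof (rule nn_integral_FTC_Icc)
    show "(\<lambda>x. 1 / x :: real) \<in> borel_measurable borel" by measurable
  next
    fix x assume "x \<in> {lo..hi}"
    then have "x > 0" using assms by auto
    then show "DERIV ln x :> 1 / x" by (auto intro!: derivative_eq_intros)
    show "0 \<le> 1 / x" using \<open>x > 0\<close> by simp
  qed fact
  finally show ?thesis .
qed

lemma nn_two_ind:
  fixes M :: "'a measure"
  assumes "k \<ge> 0" "{w \<in> space M. P w} \<in> sets M" "{w \<in> space M. Q w} \<in> sets M"
  shows "(\<integral>\<^sup>+w. ennreal (k * ((if P w then 1 else 0) + (if Q w then 1 else 0))) \<partial>M)
     = ennreal k * (emeasure M {w \<in> space M. P w} + emeasure M {w \<in> space M. Q w})"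
proof -
  have "(\<integral>\<^sup>+w. ennreal (k * ((if P w then 1 else 0) + (if Q w then 1 else 0))) \<partial>M)
     = (\<integral>\<^sup>+w. ennreal k * (indicator {w \<in> space M. P w} w + indicator {w \<in> space M. Q w} w) \<partial>M)"
    using assms(1) by (intro nn_integral_cong) (auto simp: indicator_def ennreal_mult)
  also have "\<dots> = ennreal k * (\<integral>\<^sup>+w. (indicator {w \<in> space M. P w} w + indicator {w \<in> space M. Q w} w) \<partial>M)"
    using assms by (intro nn_integral_cmult) auto
  also have "(\<integral>\<^sup>+w. (indicator {w \<in> space M. P w} w + indicator {w \<in> space M. Q w} w) \<partial>M)
      = emeasure M {w \<in> space M. P w} + emeasure M {w \<in> space M. Q w}"
    using assms by (subst nn_integral_add) auto
  finally show ?thesis .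
qed

lemma claim2_fixed:
  fixes M :: "'a measure" and a rho :: "nat \<Rightarrow> 'a \<Rightarrow> real" and G g :: "real \<Rightarrow> real"
  assumes M: "prob_space M" and am: "\<And>i. a i \<in> borel_measurable M"
    and ar: "\<And>i w. w \<in> space M \<Longrightarrow> a i w < 1"
    and cdf: "\<And>i x. measure M {w \<in> space M. a i w \<le> x} = G x"
    and G_deriv: "\<And>x. x \<in> {1 - eps<..<1} \<Longrightarrow> (G has_real_derivative g x) (at x)"
    and eta: "0 < \<eta>" "\<eta> \<le> eps" "C \<ge> 0" "beta > 1"
    and gb: "\<forall>x. 1 - \<eta> < x \<and> x < 1 \<longrightarrow> g x \<le> C * (1 - x) powr (beta - 1)"
    and rm: "\<And>i. rho i \<in> borel_measurable M"
    and hrho: "\<forall>i\<in>{1..N}. measure M {w \<in> space M. \<bar>rho i w\<bar> > \<epsilon>} \<le> P1"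
    and N: "N \<ge> 1" and d: "0 < \<delta>" "2 * \<delta> < \<eta>" and ep: "0 < \<epsilon>" "\<epsilon> \<le> \<delta>"
    and lohi: "0 < lo" "lo \<le> hi" "hi \<le> \<delta>"
    and c: "c \<ge> 0" and e: "e > 0"
  shows "measure M {w \<in> space M. \<bar>c * (LBINT x=lo..hi.
               (emp_cdf N (\<lambda>i w. a i w + rho i w) (1 - x) w - emp_cdf N a (1 - x) w) / x)\<bar> > e}
     \<le> c * (ln hi - ln lo) * (P1 + C * (2 * \<delta>) powr (beta - 1) * (2 * \<epsilon>)) / e"
proof -
  interpret prob_space M by fact
  interpret PS: pair_sigma_finite M lborel
    by (simp add: lborel.sigma_finite_measure_axioms pair_sigma_finite.intro sigma_finite_measure)
  note [measurable] = am rm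
  define Wb where "Wb = C * (2 * \<delta>) powr (beta - 1) * (2 * \<epsilon>)"
  define L where "L = ln hi - ln lo"
  define k where "k x = (if lo \<le> x \<and> x \<le> hi then 1 / x else 0)" for x :: real
  define F where "F i w x = k x * ((if \<epsilon> < \<bar>rho i w\<bar> then 1 else 0) +
       (if 1 - x - \<epsilon> < a i w \<and> a i w \<le> 1 - x + \<epsilon> then 1 else 0)) / real N" for i w x
  define Z where "Z w = ennreal c * (\<Sum>i\<in>{1..N}. \<integral>\<^sup>+x. ennreal (F i w x) \<partial>lborel)" for w
  have k0: "k x \<ge> 0" for x unfolding k_def using lohi by auto
  have F0: "F i w x \<ge> 0" for i w x unfolding F_def using k0[of x] by auto
  have Fm[measurable]: "(\<lambda>(w, x). ennreal (F i w x)) \<in> borel_measurable (M \<Otimes>\<^sub>M lborel)" for i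
    unfolding F_def k_def by measurable
  have Fmx[measurable]: "(\<lambda>x. ennreal (F i w x)) \<in> borel_measurable lborel" for i w
    unfolding F_def k_def by measurable
  have P1: "P1 \<ge> 0" using hrho N by (meson atLeastAtMost_iff le_refl measure_nonneg order_trans)
  have L0: "L \<ge> 0" unfolding L_def using lohi by simp
  have wb: "measure M {w \<in> space M. 1 - x - \<epsilon> < a i w \<and> a i w \<le> 1 - x + \<epsilon>} \<le> Wb"
    if x: "lo \<le> x" "x \<le> hi" for i x
  proof -
    have "measure M {w \<in> space M. 1 - x - \<epsilon> < a i w \<and> a i w \<le> 1 - x + \<epsilon>}
        \<le> C * (1 - (1 - x - \<epsilon>)) powr (beta - 1) * ((1 - x + \<epsilon>) - (1 - x - \<epsilon>))"
      by (rule window[OF M am ar cdf G_deriv eta gb]) (use d ep x lohi in auto)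
    also have "\<dots> = C * (x + \<epsilon>) powr (beta - 1) * (2 * \<epsilon>)" by simp
    also have "\<dots> \<le> Wb" unfolding Wb_def
      using d ep eta x lohi by (intro mult_right_mono mult_left_mono powr_mono2) auto
    finally show ?thesis .
  qed
  have Wb0: "Wb \<ge> 0" unfolding Wb_def using eta ep by simp
  have "measure M {w \<in> space M. \<bar>c * (LBINT x=lo..hi.
               (emp_cdf N (\<lambda>i w. a i w + rho i w) (1 - x) w - emp_cdf N a (1 - x) w) / x)\<bar> > e}
     \<le> c * L * (P1 + Wb) / e"
  proof (rule markov_enn[OF M _ _ _ e])
    fix w assume w: "w \<in> space M"
    define f where "f x = (emp_cdf N (\<lambda>i w. a i w + rho i w) (1 - x) w - emp_cdf N a (1 - x) w) / x" for x
    have "(LBINT x=lo..hi. f x) = (LBINT x:{lo..hi}. f x)"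
      using lohi by (intro interval_integral_Icc) simp
    also have "\<dots> = integral\<^sup>L lborel (\<lambda>x. indicator {lo..hi} x *\<^sub>R f x)"
      by (simp add: set_lebesgue_integral_def)
    finally have eqI: "(LBINT x=lo..hi. f x) = integral\<^sup>L lborel (\<lambda>x. indicator {lo..hi} x *\<^sub>R f x)" .
    have pw: "norm (indicator {lo..hi} x *\<^sub>R f x) \<le> (\<Sum>i\<in>{1..N}. F i w x)" for x
    proof (cases "lo \<le> x \<and> x \<le> hi")
      case True
      then have x0: "x > 0" using lohi by auto
      have "norm (indicator {lo..hi} x *\<^sub>R f x) = \<bar>emp_cdf N (\<lambda>i w. a i w + rho i w) (1 - x) w - emp_cdf N a (1 - x) w\<bar> / x"
        using True x0 by (simp add: f_def indicator_def abs_divide)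
      also have "\<dots> \<le> ((\<Sum>i\<in>{1..N}. (if \<epsilon> < \<bar>rho i w\<bar> then 1 else 0) +
           (if 1 - x - \<epsilon> < a i w \<and> a i w \<le> 1 - x + \<epsilon> then 1 else 0)) / real N) / x"
        using x0 by (intro divide_right_mono emp_diff) auto
      also have "\<dots> = (\<Sum>i\<in>{1..N}. F i w x)"
        unfolding F_def k_def using True by (simp add: sum_divide_distrib[symmetric] sum_distrib_left[symmetric])
      finally show ?thesis .
    next
      case False
      then have "indicator {lo..hi} x = (0::real)" by (auto simp: indicator_def)
      then show ?thesis using F0 by (simp add: sum_nonneg)
    qed
    have "ennreal \<bar>integral\<^sup>L lborel (\<lambda>x. indicator {lo..hi} x *\<^sub>R f x)\<bar>
        \<le> (\<integral>\<^sup>+x. ennreal (norm (indicator {lo..hi} x *\<^sub>R f x)) \<partial>lborel)"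
    proof (cases "integrable lborel (\<lambda>x. indicator {lo..hi} x *\<^sub>R f x)")
      case True
      then show ?thesis using integral_norm_bound_ennreal[OF True] by simp
    next
      case False
      then show ?thesis by (simp add: not_integrable_integral_eq)
    qed
    also have "\<dots> \<le> (\<integral>\<^sup>+x. (\<Sum>i\<in>{1..N}. ennreal (F i w x)) \<partial>lborel)"
      using pw F0 by (intro nn_integral_mono) (simp add: ennreal_leI)
    also have "\<dots> = (\<Sum>i\<in>{1..N}. \<integral>\<^sup>+x. ennreal (F i w x) \<partial>lborel)"
      by (intro nn_integral_sum) simp
    finally have b: "ennreal \<bar>LBINT x=lo..hi. f x\<bar> \<le> (\<Sum>i\<in>{1..N}. \<integral>\<^sup>+x. ennreal (F i w x) \<partial>lborel)"
      unfolding eqI .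
    have "ennreal \<bar>c * (LBINT x=lo..hi. f x)\<bar> = ennreal c * ennreal \<bar>LBINT x=lo..hi. f x\<bar>"
      using c by (simp add: abs_mult ennreal_mult)
    also have "\<dots> \<le> Z w" unfolding Z_def using b by (intro mult_left_mono) auto
    finally show "ennreal \<bar>c * (LBINT x=lo..hi. (emp_cdf N (\<lambda>i w. a i w + rho i w) (1 - x) w - emp_cdf N a (1 - x) w) / x)\<bar> \<le> Z w"
      unfolding f_def .
  next
    have "(\<integral>\<^sup>+w. Z w \<partial>M) = ennreal c * (\<Sum>i\<in>{1..N}. \<integral>\<^sup>+w. (\<integral>\<^sup>+x. ennreal (F i w x) \<partial>lborel) \<partial>M)"
      unfolding Z_def by (simp add: nn_integral_cmult nn_integral_sum)
    also have "\<dots> = ennreal c * (\<Sum>i\<in>{1..N}. \<integral>\<^sup>+x. (\<integral>\<^sup>+w. ennreal (F i w x) \<partial>M) \<partial>lborel)"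
      by (intro arg_cong2[where f="(*)"] sum.cong refl PS.Fubini'[symmetric]) (use Fm in simp)
    also have "\<dots> \<le> ennreal c * (\<Sum>i\<in>{1..N}. \<integral>\<^sup>+x. ennreal (k x * ((P1 + Wb) / real N)) \<partial>lborel)"
    proof (intro mult_left_mono sum_mono nn_integral_mono)
      fix i x assume i: "i \<in> {1..N}"
      have "(\<integral>\<^sup>+w. ennreal (F i w x) \<partial>M) = ennreal (k x / real N) *
          (emeasure M {w \<in> space M. \<epsilon> < \<bar>rho i w\<bar>} + emeasure M {w \<in> space M. 1 - x - \<epsilon> < a i w \<and> a i w \<le> 1 - x + \<epsilon>})"
        unfolding F_def using k0[of x]
        by (subst nn_two_ind[symmetric]) (auto intro!: nn_integral_cong simp: field_simps)
      also have "\<dots> \<le> ennreal (k x / real N) * (ennreal P1 + ennreal Wb)"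
      proof (cases "lo \<le> x \<and> x \<le> hi")
        case True
        show ?thesis using hrho i wb[of x i] True
          by (intro mult_left_mono add_mono) (auto simp: emeasure_eq_measure intro!: ennreal_leI)
      next
        case False
        then have "k x = 0" unfolding k_def by auto
        then show ?thesis by simp
      qed
      also have "\<dots> = ennreal (k x / real N * (P1 + Wb))"
        using k0[of x] P1 Wb0 by (subst ennreal_mult) (auto simp: ennreal_plus)
      also have "k x / real N * (P1 + Wb) = k x * ((P1 + Wb) / real N)" by simp
      finally show "(\<integral>\<^sup>+w. ennreal (F i w x) \<partial>M) \<le> ennreal (k x * ((P1 + Wb) / real N))" .
    qed simp
    also have "\<dots> = ennreal c * (\<Sum>i\<in>{1..N}. ennreal ((P1 + Wb) / real N) * ennreal L)"
    proof -
      have "(\<integral>\<^sup>+x. ennreal (k x * ((P1 + Wb) / real N)) \<partial>lborel)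
          = (\<integral>\<^sup>+x. ennreal ((P1 + Wb) / real N) * ennreal (k x) \<partial>lborel)"
        using k0 P1 Wb0 by (intro nn_integral_cong) (simp add: ennreal_mult[symmetric] mult.commute)
      also have "\<dots> = ennreal ((P1 + Wb) / real N) * ennreal L"
        unfolding L_def k_def using lohi
        by (subst nn_integral_cmult) (auto simp: nn_integral_inv)
      finally show ?thesis by simp
    qed
    also have "\<dots> = ennreal (c * L * (P1 + Wb))"
    proof -
      have "ennreal c * (\<Sum>i\<in>{1..N}. ennreal ((P1 + Wb) / real N) * ennreal L)
          = ennreal c * (ennreal (real N) * (ennreal ((P1 + Wb) / real N) * ennreal L))"
        by (simp add: ennreal_of_nat_eq_real_of_nat)
      also have "\<dots> = ennreal (c * (real N * ((P1 + Wb) / real N * L)))"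
        using c P1 Wb0 L0 by (simp add: ennreal_mult[symmetric] del: ennreal_plus)
      also have "c * (real N * ((P1 + Wb) / real N * L)) = c * L * (P1 + Wb)" using N by simp
      finally show ?thesis .
    qed
    finally show "(\<integral>\<^sup>+w. Z w \<partial>M) \<le> ennreal (c * L * (P1 + Wb))" .
  qed (use c P1 Wb0 L0 in simp)
  then show ?thesis unfolding Wb_def L_def .
qed



lemma aux_eq:
  fixes S D l X Q Y C Z1 Z2 :: real
  assumes "D \<noteq> 0" "Q \<noteq> 0"
  shows "S / D * l * (X / Q + Y + C * Z1 * Z2) = S * l * (X / (D * Q)) + S * l * (Y / D) + C * (S * l * (Z1 * Z2 / D))"
  using assms by (simp add: field_simps)

lemma alg_bound:
  fixes d Nr beta p chi chi' C l S T1 t m c :: real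
  assumes d: "0 < d" "d < 1" and beta: "beta > 1" and p: "p \<ge> 1" and Nr: "Nr \<ge> 1" and C: "C \<ge> 0"
    and l: "l = - ln d" "l \<ge> 1"
    and S: "S = sqrt (Nr * d powr beta)"
    and T1: "T1 = (chi / d powr (p + beta)) powr (1 / (p + 1))"
    and t: "t = max T1 (1 / (S * l)^2)"
    and m: "m = S * l * max (chi' / d powr beta) T1"
    and c: "c = sqrt (Nr / d powr beta)"
  shows "c * l * (max chi 0 / (d * t) powr p + max chi' 0 + C * (2 * d) powr (beta - 1) * (2 * (d * t)))
      \<le> (1 + C * 2 powr beta) * (m + 1 / (S * l)) + m"
proof -
  have dB: "d powr beta > 0" using d by simp
  have S0: "S > 0" using S Nr dB by simp
  have Sl0: "S * l > 0" using S0 l(2) by simp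
  have T10: "T1 \<ge> 0" using T1 by simp
  have "1 / (S * l)^2 > 0" using Sl0 S0 l(2) by simp
  then have t0: "t > 0" using t by (simp add: less_max_iff_disj)
  have tT1: "T1 \<le> t" using t by simp
  have m0: "m \<ge> 0" using m Sl0 T10 by (auto intro!: mult_nonneg_nonneg simp: max_def)
  have cS: "c = S / d powr beta"
  proof -
    have "S / d powr beta = sqrt (Nr * d powr beta) / sqrt ((d powr beta)^2)"
      using S dB by simp
    also have "\<dots> = sqrt (Nr * d powr beta / (d powr beta)^2)" by (simp add: real_sqrt_divide)
    also have "Nr * d powr beta / (d powr beta)^2 = Nr / d powr beta" using dB by (simp add: power2_eq_square)
    finally show ?thesis using c by simp
  qed
  have A: "max chi 0 / (d powr beta * (d * t) powr p) \<le> t"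
  proof (cases "chi \<le> 0")
    case True then show ?thesis using t0 by simp
  next
    case False
    then have chi: "chi > 0" by simp
    have "T1 powr (p + 1) = chi / d powr (p + beta)"
      using T1 chi d p by (simp add: powr_powr)
    moreover have "T1 powr (p + 1) \<le> t powr (p + 1)"
      using T10 tT1 p by (intro powr_mono2) auto
    ultimately have "chi / d powr (p + beta) \<le> t powr (p + 1)" by simp
    then have "chi \<le> t powr (p + 1) * d powr (p + beta)" using d by (simp add: field_simps)
    also have "\<dots> = t * (d powr beta * (d * t) powr p)"
      using t0 d by (simp add: powr_add powr_mult)
    finally have "chi \<le> t * (d powr beta * (d * t) powr p)" .
    moreover have "d powr beta * (d * t) powr p > 0" using d t0 by simp
    ultimately show ?thesis using chi by (simp add: field_simps)
  qed
  have B: "max chi' 0 / d powr beta \<le> max (chi' / d powr beta) T1"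
    using T10 dB by (auto simp: max_def)
  have Cq: "(2 * d) powr (beta - 1) * (2 * (d * t)) / d powr beta = 2 powr beta * t"
  proof -
    have "(2 * d) powr (beta - 1) * (2 * (d * t)) = (2 powr (beta - 1) * 2) * (d powr (beta - 1) * d) * t"
      using d by (simp add: powr_mult)
    also have "2 powr (beta - 1) * 2 = (2::real) powr beta" by (simp add: powr_diff)
    also have "d powr (beta - 1) * d = d powr beta" using d by (simp add: powr_diff)
    finally have eq: "(2 * d) powr (beta - 1) * (2 * (d * t)) = 2 powr beta * d powr beta * t" .
    show ?thesis unfolding eq using dB by simp
  qed
  have St: "S * l * t \<le> m + 1 / (S * l)"
  proof -
    have h1: "S * l * T1 \<le> m" unfolding m using Sl0 by (intro mult_left_mono) auto
    have h2: "S * l * (1 / (S * l)^2) = 1 / (S * l)" using Sl0 by (simp add: power2_eq_square)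
    have h3: "0 \<le> 1 / (S * l)" using Sl0 by simp
    have "S * l * t = max (S * l * T1) (S * l * (1 / (S * l)^2))"
      unfolding t using Sl0 by (simp only: max_mult_distrib_left less_imp_le if_True)
    then show ?thesis using h1 h2 h3 m0 by linarith
  qed
  have "c * l * (max chi 0 / (d * t) powr p + max chi' 0 + C * (2 * d) powr (beta - 1) * (2 * (d * t)))
      = S * l * (max chi 0 / (d powr beta * (d * t) powr p)) + S * l * (max chi' 0 / d powr beta)
        + C * (S * l * ((2 * d) powr (beta - 1) * (2 * (d * t)) / d powr beta))"
    unfolding cS using dB d t0 by (intro aux_eq) simp_all
  also have "\<dots> \<le> S * l * t + S * l * max (chi' / d powr beta) T1 + C * (S * l * (2 powr beta * t))"
    unfolding Cq using A B Sl0 C by (intro add_mono mult_left_mono) auto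
  also have "\<dots> = (1 + C * 2 powr beta) * (S * l * t) + m" unfolding m by (simp add: algebra_simps)
  also have "\<dots> \<le> (1 + C * 2 powr beta) * (m + 1 / (S * l)) + m"
    using St C by (intro add_mono mult_left_mono) auto
  finally show ?thesis .
qed


theorem proposition2:
  fixes M :: "'a measure"
    and a :: "nat \<Rightarrow> 'a \<Rightarrow> real"
    and rho :: "nat \<Rightarrow> nat \<Rightarrow> 'a \<Rightarrow> real"
    and G g :: "real \<Rightarrow> real"
    and eps beta nu kappa r p :: real
    and delta chi chi' :: "nat \<Rightarrow> real"
  assumes M: "prob_space M"
    and indep: "prob_space.indep_vars M (\<lambda>_. borel) a UNIV"
    and a_range: "\<And>i w. w \<in> space M \<Longrightarrow> a i w \<in> {0<..<1}"
    and cdf: "\<And>i x. measure M {w \<in> space M. a i w \<le> x} = G x"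
    and eps: "0 < eps" "eps < 1"
    and G_deriv: "\<And>x. x \<in> {1 - eps<..<1} \<Longrightarrow> (G has_real_derivative g x) (at x)"
    and g_cont: "continuous_on {1 - eps<..<1} g"
    and params: "beta > 1" "nu > 0" "kappa > 0"
    and g_asym: "(\<lambda>x. g x - kappa * beta * (1 - x) powr (beta - 1))
                   \<in> O[at_left 1](\<lambda>x. (1 - x) powr (beta - 1) * (1 - x) powr nu)"
    and rho_meas: "\<And>N i. rho N i \<in> borel_measurable M"
    and r: "r > 1"
    and delta_pos: "eventually (\<lambda>N. delta N > 0) sequentially"
    and delta_lim: "delta \<longlonglongrightarrow> 0"
    and delta_big: "filterlim (\<lambda>N. real N * delta N powr beta) at_top sequentially"
    and p: "p \<ge> 1"
    and rho_bound: "eventually (\<lambda>N. \<forall>i\<in>{1..N}. \<forall>e\<in>{0<..<1}.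
                      measure M {w \<in> space M. \<bar>rho N i w\<bar> > e} \<le> chi N / e powr p + chi' N)
                    sequentially"
    and chi_lim: "chi \<longlonglongrightarrow> 0"
    and chi'_lim: "chi' \<longlonglongrightarrow> 0"
    and rate: "(\<lambda>N. sqrt (real N * delta N powr beta)
                 * max (chi' N / delta N powr beta)
                       ((chi N / delta N powr (p + beta)) powr (1 / (p + 1)))
                 * ln (delta N)) \<longlonglongrightarrow> 0"
  shows "o_p_one M (\<lambda>N w. sqrt (real N / delta N powr beta) *
            (emp_cdf N (\<lambda>i w. a i w + rho N i w) (1 - delta N) w - emp_cdf N a (1 - delta N) w))
         \<and> o_p_one M (\<lambda>N w. sqrt (real N / delta N powr beta) *
            (LBINT x=delta N powr r..delta N.
               (emp_cdf N (\<lambda>i w. a i w + rho N i w) (1 - x) w - emp_cdf N a (1 - x) w) / x))"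
  proof -
  interpret prob_space M by (rule M)
  have am: "a i \<in> borel_measurable M" for i
    using indep unfolding indep_vars_def by auto
  have ar: "a i w < 1" if "w \<in> space M" for i w using a_range that by auto
  obtain C \<eta> where C: "C \<ge> 0" "0 < \<eta>" "\<eta> \<le> eps"
      and gb: "\<forall>x. 1 - \<eta> < x \<and> x < 1 \<longrightarrow> g x \<le> C * (1 - x) powr (beta - 1)"
    using g_bound[OF eps params g_asym] by blast
  have eta: "0 < \<eta>" "\<eta> \<le> eps" "C \<ge> 0" "beta > 1" using C params by auto
  define S where "S N = sqrt (real N * delta N powr beta)" for N
  define l where "l N = - ln (delta N)" for N
  define T1 where "T1 N = (chi N / delta N powr (p + beta)) powr (1 / (p + 1))" for N
  define t where "t N = max (T1 N) (1 / (S N * l N)^2)" for N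
  define m where "m N = S N * l N * max (chi' N / delta N powr beta) (T1 N)" for N
  define V where "V N = (1 + C * 2 powr beta) * (m N + 1 / (S N * l N)) + m N" for N
  define P1 where "P1 N = max (chi N) 0 / (delta N * t N) powr p + max (chi' N) 0" for N
  define c where "c N = sqrt (real N / delta N powr beta)" for N
  have m_lim: "m \<longlonglongrightarrow> 0"
  proof -
    have "m = (\<lambda>N. - (sqrt (real N * delta N powr beta)
                 * max (chi' N / delta N powr beta)
                       ((chi N / delta N powr (p + beta)) powr (1 / (p + 1)))
                 * ln (delta N)))"
      unfolding m_def S_def l_def T1_def by (simp add: fun_eq_iff algebra_simps)
    then show ?thesis using tendsto_minus[OF rate] by simp
  qed
  have S_top: "filterlim S at_top sequentially"
    unfolding S_def by (rule filterlim_compose[OF sqrt_at_top delta_big])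
  have ev1: "eventually (\<lambda>N. 0 < delta N \<and> delta N < exp (-1) \<and> 2 * delta N < \<eta>) sequentially"
  proof -
    have "eventually (\<lambda>N. delta N < min (exp (-1)) (\<eta> / 2)) sequentially"
      using order_tendstoD(2)[OF delta_lim, of "min (exp (-1)) (\<eta> / 2)"] C by simp
    then show ?thesis using delta_pos by eventually_elim auto
  qed
  have ev2: "eventually (\<lambda>N. S N \<ge> 1) sequentially"
    using S_top by (simp add: filterlim_at_top)
  have ev3: "eventually (\<lambda>N. m N < 1) sequentially"
    using order_tendstoD(2)[OF m_lim, of 1] by simp
  have ev4: "eventually (\<lambda>N. N \<ge> 1) sequentially" by (rule eventually_ge_at_top)
  have l1: "l N \<ge> 1" if "0 < delta N" "delta N < exp (-1)" for N
  proof -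
    have "ln (delta N) < ln (exp (-1))" using that by (intro ln_less_cancel_iff[THEN iffD2]) auto
    then show ?thesis unfolding l_def by simp
  qed
  have inv_lim: "(\<lambda>N. 1 / (S N * l N)) \<longlonglongrightarrow> 0"
  proof (rule tendsto_sandwich[OF _ _ tendsto_const tendsto_inverse_0_at_top[OF S_top]])
    show "eventually (\<lambda>N. 0 \<le> 1 / (S N * l N)) sequentially"
      using ev1 ev2
    proof eventually_elim
      case (elim N)
      then have "l N \<ge> 1" using l1 by auto
      then show ?case using elim by simp
    qed
    show "eventually (\<lambda>N. 1 / (S N * l N) \<le> inverse (S N)) sequentially"
      using ev1 ev2
    proof eventually_elim
      case (elim N)
      then have "l N \<ge> 1" using l1 by auto
      then have "S N \<le> S N * l N" using elim by (simp add: mult_le_cancel_left1)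
      then show ?case using elim by (simp add: divide_simps)
    qed
  qed
  have V_lim: "V \<longlonglongrightarrow> 0"
    unfolding V_def using tendsto_add[OF tendsto_mult[OF tendsto_const tendsto_add[OF m_lim inv_lim]] m_lim] by simp
  have main: "eventually (\<lambda>N.
     measure M {w \<in> space M. \<bar>sqrt (real N / delta N powr beta) *
            (emp_cdf N (\<lambda>i w. a i w + rho N i w) (1 - delta N) w - emp_cdf N a (1 - delta N) w)\<bar> > e} \<le> V N / e
     \<and> measure M {w \<in> space M. \<bar>sqrt (real N / delta N powr beta) *
            (LBINT x=delta N powr r..delta N.
               (emp_cdf N (\<lambda>i w. a i w + rho N i w) (1 - x) w - emp_cdf N a (1 - x) w) / x)\<bar> > e}
        \<le> (r - 1) * V N / e) sequentially" if e: "e > 0" for e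
    using ev1 ev2 ev3 ev4 rho_bound
  proof eventually_elim
    case (elim N)
    define d where "d = delta N"
    have d: "0 < d" "d < exp (-1)" "2 * d < \<eta>" using elim d_def by auto
    have d1: "d < 1" proof -
      have "exp (-1::real) < 1" by simp
      then show ?thesis using d(2) by linarith
    qed
    have lN: "l N \<ge> 1" using l1 elim by auto
    have Sl: "S N * l N \<ge> 1" using mult_mono[of 1 "S N" 1 "l N"] elim lN by simp
    have T10: "T1 N \<ge> 0" unfolding T1_def by simp
    have "T1 N \<le> max (chi' N / delta N powr beta) (T1 N)" by simp
    also have "\<dots> \<le> m N"
    proof -
      have mx0: "0 \<le> max (chi' N / delta N powr beta) (T1 N)" using T10 by simp
      have Sl0: "0 \<le> S N * l N" using Sl by simp
      show ?thesis unfolding m_def using mult_mono[OF Sl order_refl Sl0 mx0] by simp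
    qed
    finally have T1m: "T1 N \<le> 1" using elim by simp
    have sq: "1 \<le> (S N * l N)^2" using one_le_power[OF Sl] .
    have gen: "\<And>x::real. 1 \<le> x \<Longrightarrow> 1 / x \<le> 1 \<and> 1 / x > 0" by simp
    have "1 / (S N * l N)^2 \<le> 1" using gen[OF sq] by blast
    then have t1: "t N \<le> 1" unfolding t_def using T1m by simp
    have "1 / (S N * l N)^2 > 0" using gen[OF sq] by blast
    then have t0: "t N > 0" unfolding t_def by (simp add: less_max_iff_disj)
    define \<epsilon> where "\<epsilon> = d * t N"
    have ep2: "\<epsilon> \<le> d" unfolding \<epsilon>_def using mult_left_mono[OF t1, of d] d by simp
    have ep: "0 < \<epsilon>" "\<epsilon> \<le> d" "\<epsilon> < 1" using ep2 d1 apply (simp_all)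
      unfolding \<epsilon>_def using d t0 by simp
    have hrho: "\<forall>i\<in>{1..N}. measure M {w \<in> space M. \<bar>rho N i w\<bar> > \<epsilon>} \<le> P1 N"
    proof
      fix i assume i: "i \<in> {1..N}"
      have "measure M {w \<in> space M. \<bar>rho N i w\<bar> > \<epsilon>} \<le> chi N / \<epsilon> powr p + chi' N"
        using elim i ep by auto
      also have "\<dots> \<le> max (chi N) 0 / \<epsilon> powr p + max (chi' N) 0"
        using ep by (intro add_mono divide_right_mono) auto
      finally show "measure M {w \<in> space M. \<bar>rho N i w\<bar> > \<epsilon>} \<le> P1 N"
        unfolding P1_def \<epsilon>_def d_def .
    qed
    have N1: "N \<ge> 1" using elim by simp
    have alg: "c N * l N * (P1 N + C * (2 * d) powr (beta - 1) * (2 * \<epsilon>)) \<le> V N"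
      unfolding P1_def V_def \<epsilon>_def d_def
      by (rule alg_bound[OF _ _ _ p _ C(1) _ _ S_def T1_def t_def m_def c_def])
         (use d d1 params N1 lN in \<open>auto simp: d_def l_def\<close>)
    have Wb0: "C * (2 * d) powr (beta - 1) * (2 * \<epsilon>) \<ge> 0" using C ep by simp
    have P10: "P1 N \<ge> 0" unfolding P1_def by simp
    have c0: "c N \<ge> 0" unfolding c_def by simp
    have Q0: "c N * (P1 N + C * (2 * d) powr (beta - 1) * (2 * \<epsilon>)) \<ge> 0"
      using c0 P10 Wb0 by simp
    have b1: "measure M {w \<in> space M. \<bar>c N * (emp_cdf N (\<lambda>i w. a i w + rho N i w) (1 - d) w - emp_cdf N a (1 - d) w)\<bar> > e}
       \<le> c N * (P1 N + C * (2 * d) powr (beta - 1) * (2 * \<epsilon>)) / e"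
      by (rule claim1_fixed[OF M am ar cdf G_deriv eta gb rho_meas hrho N1 d(1) d(3) ep(1) ep(2) c0 e])
    also have "\<dots> \<le> V N / e"
    proof (rule divide_right_mono)
      have "c N * (P1 N + C * (2 * d) powr (beta - 1) * (2 * \<epsilon>))
          \<le> c N * (P1 N + C * (2 * d) powr (beta - 1) * (2 * \<epsilon>)) * l N"
        using Q0 lN by (simp add: mult_le_cancel_left1)
      also have "\<dots> = c N * l N * (P1 N + C * (2 * d) powr (beta - 1) * (2 * \<epsilon>))" by simp
      finally show "c N * (P1 N + C * (2 * d) powr (beta - 1) * (2 * \<epsilon>)) \<le> V N" using alg by linarith
    qed (use e in simp)
    finally have r1: "measure M {w \<in> space M. \<bar>c N * (emp_cdf N (\<lambda>i w. a i w + rho N i w) (1 - d) w - emp_cdf N a (1 - d) w)\<bar> > e}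
       \<le> V N / e" .
    have lo: "0 < d powr r" "d powr r \<le> d" using d d1 r
      by (auto intro: powr_le_one_le[THEN order_trans] simp: powr_mono')
    have b2: "measure M {w \<in> space M. \<bar>c N * (LBINT x=d powr r..d.
               (emp_cdf N (\<lambda>i w. a i w + rho N i w) (1 - x) w - emp_cdf N a (1 - x) w) / x)\<bar> > e}
       \<le> c N * (ln d - ln (d powr r)) * (P1 N + C * (2 * d) powr (beta - 1) * (2 * \<epsilon>)) / e"
      by (rule claim2_fixed[OF M am ar cdf G_deriv eta gb rho_meas hrho N1 d(1) d(3) ep(1) ep(2) lo order_refl c0 e])
    also have "ln d - ln (d powr r) = (r - 1) * l N" using d unfolding l_def d_def by (simp add: ln_powr algebra_simps)
    also have "c N * ((r - 1) * l N) * (P1 N + C * (2 * d) powr (beta - 1) * (2 * \<epsilon>)) / e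
        = (r - 1) * (c N * l N * (P1 N + C * (2 * d) powr (beta - 1) * (2 * \<epsilon>))) / e" by simp
    also have "\<dots> \<le> (r - 1) * V N / e"
      using alg r e by (intro divide_right_mono mult_left_mono) auto
    finally have r2: "measure M {w \<in> space M. \<bar>c N * (LBINT x=d powr r..d.
               (emp_cdf N (\<lambda>i w. a i w + rho N i w) (1 - x) w - emp_cdf N a (1 - x) w) / x)\<bar> > e}
       \<le> (r - 1) * V N / e" .
    show ?case using r1 r2 unfolding c_def d_def by simp
  qed
  show ?thesis
    unfolding o_p_one_def
  proof (intro conjI allI impI)
    fix e :: real assume e: "e > 0"
    show "(\<lambda>N. measure M {w \<in> space M. \<bar>sqrt (real N / delta N powr beta) *
            (emp_cdf N (\<lambda>i w. a i w + rho N i w) (1 - delta N) w - emp_cdf N a (1 - delta N) w)\<bar> > e}) \<longlonglongrightarrow> 0"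
    proof (rule tendsto_sandwich[OF _ _ tendsto_const])
      show "eventually (\<lambda>N. 0 \<le> measure M {w \<in> space M. \<bar>sqrt (real N / delta N powr beta) *
            (emp_cdf N (\<lambda>i w. a i w + rho N i w) (1 - delta N) w - emp_cdf N a (1 - delta N) w)\<bar> > e}) sequentially"
        by simp
      show "eventually (\<lambda>N. measure M {w \<in> space M. \<bar>sqrt (real N / delta N powr beta) *
            (emp_cdf N (\<lambda>i w. a i w + rho N i w) (1 - delta N) w - emp_cdf N a (1 - delta N) w)\<bar> > e} \<le> V N / e) sequentially"
        using main[OF e] by eventually_elim simp
      show "(\<lambda>N. V N / e) \<longlonglongrightarrow> 0" using tendsto_divide[OF V_lim tendsto_const, of e] e by simp
    qed
  next
    fix e :: real assume e: "e > 0"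
    show "(\<lambda>N. measure M {w \<in> space M. \<bar>sqrt (real N / delta N powr beta) *
            (LBINT x=delta N powr r..delta N.
               (emp_cdf N (\<lambda>i w. a i w + rho N i w) (1 - x) w - emp_cdf N a (1 - x) w) / x)\<bar> > e}) \<longlonglongrightarrow> 0"
    proof (rule tendsto_sandwich[OF _ _ tendsto_const])
      show "eventually (\<lambda>N. 0 \<le> measure M {w \<in> space M. \<bar>sqrt (real N / delta N powr beta) *
            (LBINT x=delta N powr r..delta N.
               (emp_cdf N (\<lambda>i w. a i w + rho N i w) (1 - x) w - emp_cdf N a (1 - x) w) / x)\<bar> > e}) sequentially"
        by simp
      show "eventually (\<lambda>N. measure M {w \<in> space M. \<bar>sqrt (real N / delta N powr beta) *
            (LBINT x=delta N powr r..delta N.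
               (emp_cdf N (\<lambda>i w. a i w + rho N i w) (1 - x) w - emp_cdf N a (1 - x) w) / x)\<bar> > e} \<le> (r - 1) * V N / e) sequentially"
        using main[OF e] by eventually_elim simp
      show "(\<lambda>N. (r - 1) * V N / e) \<longlonglongrightarrow> 0"
        using tendsto_divide[OF tendsto_mult[OF tendsto_const V_lim] tendsto_const, of e "r - 1"] e by simp
    qed
  qed
qed

end
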